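(* Let $\mathcal{H}$ be any directed hypergraph on $\{1,2,3\}$ and consider any network dynamical system on $\mathcal{H}$ with one-dimensional node states, smooth $F$ and smooth nodeunspecific coupling functions $G_e$ (possibly different for different hyperedges). Then the resulting vector field is not equal to the Guckenheimer--Holmes vector field $$\dot x_1 = x_1 + a x_1^3 + b x_1x_2^2 + c x_1x_3^2,\quad \dot x_2 = x_2 + a x_2^3 + b x_2x_3^2 + c x_1^2x_2,\quad \dot x_3 = x_3 + a x_3^3 + b x_1^2x_3 + c x_2^2x_3$$ for any real $a,b,c$ with $(b,c)\neq(0,0)$. In particular, it cannot be realized for parameters satisfying $a+b+c=-1$, $-\tfrac13<a<0$, $c<a<b<0$.
   Context: A directed hypergraph on $\mathcal{V}=\{1,\dots,N\}$ is a set $\mathcal{E}$ of hyperedges $e=(T(e),H(e))$ with nonempty tail $T(e)\subseteq\mathcal V$ and head $H(e)\subseteq\mathcal V$. A network dynamical system on it is $\dot x_k = F(x_k) + \sum_{e\in\mathcal{E}:\,k\in H(e)} G_e(x_k; x_{T(e)})$ on $\mathbb{R}^N$, with $F:\mathbb R\to\mathbb R$ smooth and each $G_e:\mathbb{R}\times\mathbb{R}^{|T(e)|}\to\mathbb{R}$ smooth, invariant under permutations of its last $|T(e)|$ arguments and depending nontrivially on them. The coupling is nodeunspecific if each $G_e(z;y)$ does not depend on its first argument $z$, i.e. $G_e(x_k;x_{T(e)})=G_e(x_{T(e)})$ (the receiving node may still belong to $T(e)$). *)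

theory Defs
  imports "HOL-Analysis.Analysis"
begin

fun Ck :: "nat \<Rightarrow> ('a::euclidean_space \<Rightarrow> real) \<Rightarrow> bool" where
  "Ck 0 f = continuous_on UNIV f"
| "Ck (Suc k) f = ((\<forall>x. f differentiable (at x)) \<and>
      (\<forall>i\<in>Basis. Ck k (\<lambda>x. frechet_derivative f (at x) i)))"

definition smooth :: "('a::euclidean_space \<Rightarrow> real) \<Rightarrow> bool" where
  "smooth f \<longleftrightarrow> (\<forall>k. Ck k f)"

type_synonym hedge = "3 set \<times> 3 set"

definition dir_hypergraph :: "hedge set \<Rightarrow> bool" where
  "dir_hypergraph E \<longleftrightarrow> (\<forall>e\<in>E. fst e \<noteq> {} \<and> snd e \<noteq> {})"

text \<open>Nodeunspecific admissible coupling function for hyperedge e, represented as a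
  function on R^3 depending only on the tail coordinates: smooth, symmetric under
  permutations of the tail, and depending nontrivially on the tail variables.\<close>
definition nodeunspec_coupling :: "hedge \<Rightarrow> (real^3 \<Rightarrow> real) \<Rightarrow> bool" where
  "nodeunspec_coupling e g \<longleftrightarrow>
     smooth g \<and>
     (\<forall>x y. (\<forall>i\<in>fst e. x $ i = y $ i) \<longrightarrow> g x = g y) \<and>
     (\<forall>\<sigma>. \<sigma> permutes (fst e) \<longrightarrow> (\<forall>x. g (\<chi> i. x $ \<sigma> i) = g x)) \<and>
     (\<exists>x y. g x \<noteq> g y)"

definition network_vf ::
  "(real \<Rightarrow> real) \<Rightarrow> hedge set \<Rightarrow> (hedge \<Rightarrow> real^3 \<Rightarrow> real) \<Rightarrow> real^3 \<Rightarrow> 3 \<Rightarrow> real" where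
  "network_vf F E G x k = F (x $ k) + (\<Sum>e\<in>{e\<in>E. k \<in> snd e}. G e x)"

definition GH_vf :: "real \<Rightarrow> real \<Rightarrow> real \<Rightarrow> real^3 \<Rightarrow> 3 \<Rightarrow> real" where
  "GH_vf a b c x k =
     (if k = 1 then x$1 + a * x$1^3 + b * x$1 * x$2^2 + c * x$1 * x$3^2
      else if k = 2 then x$2 + a * x$2^3 + b * x$2 * x$3^2 + c * x$1^2 * x$2
      else x$3 + a * x$3^3 + b * x$1^2 * x$3 + c * x$2^2 * x$3)"

end

theory Submission
  imports Defs
begin

definition uu :: "3 \<Rightarrow> 3 \<Rightarrow> real \<Rightarrow> real \<Rightarrow> real^3" where
  "uu i j p q = (\<chi> k. if k = i then p else if k = j then q else 0)"

lemma key: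
  assumes nc: "nodeunspec_coupling e g" and ij: "i \<noteq> j"
  shows "g (uu i j p q) - g (uu i j 0 q) - g (uu i j p 0)
       = g (uu i j q p) - g (uu i j q 0) - g (uu i j 0 p)"
proof -
  have dep: "\<And>x y. (\<forall>k\<in>fst e. x $ k = y $ k) \<Longrightarrow> g x = g y"
   and sym: "\<And>\<sigma> x. \<sigma> permutes (fst e) \<Longrightarrow> g (\<chi> k. x $ \<sigma> k) = g x"
    using nc unfolding nodeunspec_coupling_def by blast+
  show ?thesis
  proof (cases "i \<in> fst e \<and> j \<in> fst e")
    case True
    have sw: "\<And>p q. g (uu i j p q) = g (uu i j q p)"
    proof -
      fix p q
      have "Transposition.transpose i j permutes fst e" using True by (simp add: permutes_swap_id)
      hence "g (\<chi> k. uu i j p q $ Transposition.transpose i j k) = g (uu i j p q)" by (rule sym)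
      moreover have "(\<chi> k. uu i j p q $ Transposition.transpose i j k) = uu i j q p"
        using ij by (auto simp: uu_def vec_eq_iff transpose_def)
      ultimately show "g (uu i j p q) = g (uu i j q p)" by simp
    qed
    show ?thesis using sw[of p q] sw[of 0 q] sw[of p 0] by simp
  next
    case False
    show ?thesis
    proof (cases "i \<in> fst e")
      case False
      hence d: "\<And>p q. g (uu i j p q) = g (uu i j 0 q)"
        by (auto simp: uu_def intro!: dep)
      show ?thesis using d[of p q] d[of p 0] d[of q p] d[of q 0] by simp
    next
      case True
      hence "j \<notin> fst e" using \<open>\<not> (i \<in> fst e \<and> j \<in> fst e)\<close> by blast
      hence d: "\<And>p q. g (uu i j p q) = g (uu i j p 0)"
        by (auto simp: uu_def intro!: dep)
      show ?thesis using d[of p q] d[of 0 q] d[of q p] d[of 0 p] by simp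
    qed
  qed
qed

lemma net_key:
  assumes "\<forall>e\<in>E. nodeunspec_coupling e (G e)" and ij: "i \<noteq> j"
  shows "network_vf F E G (uu i j p q) i - network_vf F E G (uu i j 0 q) i - network_vf F E G (uu i j p 0) i
       = network_vf F E G (uu i j q p) i - network_vf F E G (uu i j q 0) i - network_vf F E G (uu i j 0 p) i"
proof -
  let ?A = "{e\<in>E. i \<in> snd e}"
  have "(\<Sum>e\<in>?A. G e (uu i j p q) - G e (uu i j 0 q) - G e (uu i j p 0))
      = (\<Sum>e\<in>?A. G e (uu i j q p) - G e (uu i j q 0) - G e (uu i j 0 p))"
    using assms by (intro sum.cong refl key) auto
  hence "(\<Sum>e\<in>?A. G e (uu i j p q)) - (\<Sum>e\<in>?A. G e (uu i j 0 q)) - (\<Sum>e\<in>?A. G e (uu i j p 0))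
      = (\<Sum>e\<in>?A. G e (uu i j q p)) - (\<Sum>e\<in>?A. G e (uu i j q 0)) - (\<Sum>e\<in>?A. G e (uu i j 0 p))"
    by (simp only: sum_subtractf)
  moreover have "\<And>p q. uu i j p q $ i = p" by (simp add: uu_def)
  ultimately show ?thesis
    unfolding network_vf_def by simp
qed

theorem mainTheorem3:
  fixes E :: "hedge set" and F :: "real \<Rightarrow> real" and G :: "hedge \<Rightarrow> real^3 \<Rightarrow> real"
    and a b c :: real
  assumes "dir_hypergraph E"
    and "smooth F"
    and "\<forall>e\<in>E. nodeunspec_coupling e (G e)"
    and "(b, c) \<noteq> (0, 0)"
  shows "network_vf F E G \<noteq> GH_vf a b c"
proof
  assume eq: "network_vf F E G = GH_vf a b c"
  have 1: "network_vf F E G (uu 1 2 1 2) 1 - network_vf F E G (uu 1 2 0 2) 1 - network_vf F E G (uu 1 2 1 0) 1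
       = network_vf F E G (uu 1 2 2 1) 1 - network_vf F E G (uu 1 2 2 0) 1 - network_vf F E G (uu 1 2 0 1) 1"
    by (rule net_key[OF assms(3)]) simp
  have 2: "network_vf F E G (uu 1 3 1 2) 1 - network_vf F E G (uu 1 3 0 2) 1 - network_vf F E G (uu 1 3 1 0) 1
       = network_vf F E G (uu 1 3 2 1) 1 - network_vf F E G (uu 1 3 2 0) 1 - network_vf F E G (uu 1 3 0 1) 1"
    by (rule net_key[OF assms(3)]) simp
  from 1 have "b = 0" unfolding eq by (simp add: GH_vf_def uu_def)
  moreover from 2 have "c = 0" unfolding eq by (simp add: GH_vf_def uu_def)
  ultimately show False using assms(4) by simp
qed

end
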